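(* Let $\Delta\in\mathcal{H}_{\ge3}$ be a hypergraph on $[d]$. There exists a unique point-line configuration $N$ on $[d]$ that is minimal, with respect to the dependency order, among all point-line configurations on $[d]$ in which every $3$-element subset of every edge of $\Delta$ is dependent.
   Context: A hypergraph on $[d]$ is a collection of subsets of $[d]$ (edges) none properly contained in another; $\mathcal{H}_{\ge3}$ is the set of hypergraphs all of whose edges have size at least $3$. A point-line configuration on $[d]$ is a simple matroid (no circuits of size $1$ or $2$) of rank at most $3$; its lines are the maximal subsets of size at least $3$ and rank $2$, and a $3$-subset is dependent iff it is contained in a line. Dependency order: $N_1\le N_2$ iff every dependent set of $N_1$ is dependent in $N_2$. *)

theory Defs
  imports Main
begin

definition matroid :: "'a set \<Rightarrow> 'a set set \<Rightarrow> bool" where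
  "matroid E \<I> \<longleftrightarrow> finite E \<and> \<I> \<subseteq> Pow E \<and> {} \<in> \<I> \<and>
     (\<forall>X Y. Y \<in> \<I> \<and> X \<subseteq> Y \<longrightarrow> X \<in> \<I>) \<and>
     (\<forall>X Y. X \<in> \<I> \<and> Y \<in> \<I> \<and> card X < card Y \<longrightarrow> (\<exists>y \<in> Y - X. insert y X \<in> \<I>))"

definition dependent :: "'a set \<Rightarrow> 'a set set \<Rightarrow> 'a set \<Rightarrow> bool" where
  "dependent E \<I> X \<longleftrightarrow> X \<subseteq> E \<and> X \<notin> \<I>"

text \<open>Simple: no circuits of size 1 or 2, i.e. every set of size at most 2 is independent.
  Rank at most 3: every independent set has at most 3 elements.\<close>
definition point_line_config :: "nat \<Rightarrow> nat set set \<Rightarrow> bool" where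
  "point_line_config d \<I> \<longleftrightarrow> matroid {1..d} \<I> \<and>
     (\<forall>X. X \<subseteq> {1..d} \<and> card X \<le> 2 \<longrightarrow> X \<in> \<I>) \<and>
     (\<forall>X \<in> \<I>. card X \<le> 3)"

definition dep_le :: "nat \<Rightarrow> nat set set \<Rightarrow> nat set set \<Rightarrow> bool" where
  "dep_le d N1 N2 \<longleftrightarrow> (\<forall>X. dependent {1..d} N1 X \<longrightarrow> dependent {1..d} N2 X)"

definition hypergraph :: "nat \<Rightarrow> nat set set \<Rightarrow> bool" where
  "hypergraph d \<Delta> \<longleftrightarrow> (\<forall>F \<in> \<Delta>. F \<subseteq> {1..d}) \<and>
     (\<forall>F \<in> \<Delta>. \<forall>G \<in> \<Delta>. \<not> F \<subset> G)"

definition hypergraph_ge3 :: "nat \<Rightarrow> nat set set \<Rightarrow> bool" where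
  "hypergraph_ge3 d \<Delta> \<longleftrightarrow> hypergraph d \<Delta> \<and> (\<forall>F \<in> \<Delta>. card F \<ge> 3)"

definition realizes_hypergraph :: "nat \<Rightarrow> nat set set \<Rightarrow> nat set set \<Rightarrow> bool" where
  "realizes_hypergraph d \<Delta> N \<longleftrightarrow>
     (\<forall>F \<in> \<Delta>. \<forall>S. S \<subseteq> F \<and> card S = 3 \<longrightarrow> dependent {1..d} N S)"

end

theory Submission
  imports Defs
begin

definition mk :: "nat \<Rightarrow> nat set set \<Rightarrow> nat set set" where
  "mk d T = {X. X \<subseteq> {1..d} \<and> (card X \<le> 2 \<or> (card X = 3 \<and> X \<notin> T))}"

definition dep3 :: "nat \<Rightarrow> nat set set \<Rightarrow> nat set set" where
  "dep3 d N = {X. X \<subseteq> {1..d} \<and> card X = 3 \<and> X \<notin> N}"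

definition closedT :: "nat set set \<Rightarrow> bool" where
  "closedT T \<longleftrightarrow> (\<forall>a b c e. distinct [a,b,c,e] \<and> {a,b,c} \<in> T \<and> {a,b,e} \<in> T \<longrightarrow> {a,c,e} \<in> T)"

lemma exch3:
  assumes cl: "closedT T" and ab: "a \<noteq> b" and pqr: "distinct [p,q,r]" and nT: "{p,q,r} \<notin> T"
  shows "\<exists>y\<in>{p,q,r} - {a,b}. {a,b,y} \<notin> T"
proof (rule ccontr)
  assume H: "\<not> ?thesis"
  have C: "\<And>a b c e. distinct [a,b,c,e] \<Longrightarrow> {a,b,c} \<in> T \<Longrightarrow> {a,b,e} \<in> T \<Longrightarrow> {a,c,e} \<in> T"
    using cl unfolding closedT_def by blast
  consider "a \<notin> {p,q,r} \<and> b \<notin> {p,q,r}" | "a \<in> {p,q,r} \<and> b \<notin> {p,q,r}"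
    | "a \<notin> {p,q,r} \<and> b \<in> {p,q,r}" | "a \<in> {p,q,r} \<and> b \<in> {p,q,r}" by blast
  then show False
  proof cases
    case 1
    then have "{a,b,p} \<in> T" "{a,b,q} \<in> T" "{a,b,r} \<in> T" using H by auto
    then have "{a,p,q} \<in> T" "{a,p,r} \<in> T" using C[of a b p q] C[of a b p r] 1 pqr ab by auto
    then have "{p,a,q} \<in> T" "{p,a,r} \<in> T" by (simp_all add: insert_commute)
    then have "{p,q,r} \<in> T" using C[of p a q r] 1 pqr by auto
    then show False using nT by simp
  next
    case 2
    then obtain u v where uv: "{p,q,r} = {a,u,v}" "distinct [a,u,v]" "b \<notin> {a,u,v}"
      using pqr by (auto simp: insert_commute)
    then have "{a,b,u} \<in> T" "{a,b,v} \<in> T" using H by auto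
    then have "{a,u,v} \<in> T" using C[of a b u v] uv ab by auto
    then show False using nT uv by simp
  next
    case 3
    then obtain u v where uv: "{p,q,r} = {b,u,v}" "distinct [b,u,v]" "a \<notin> {b,u,v}"
      using pqr by (auto simp: insert_commute)
    then have "{b,a,u} \<in> T" "{b,a,v} \<in> T" using H by (auto simp: insert_commute)
    then have "{b,u,v} \<in> T" using C[of b a u v] uv ab by auto
    then show False using nT uv by simp
  next
    case 4
    then obtain w where "{p,q,r} = {a,b,w}" "w \<notin> {a,b}"
      using pqr ab by auto
    then show False using H nT by auto
  qed
qed

lemma mk_config:
  assumes cl: "closedT T"
  shows "point_line_config d (mk d T)"
proof -
  have sub: "Y \<in> mk d T \<Longrightarrow> X \<subseteq> Y \<Longrightarrow> X \<in> mk d T" for X Y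
  proof -
    assume Y: "Y \<in> mk d T" and XY: "X \<subseteq> Y"
    have fY: "finite Y" using Y unfolding mk_def by (auto intro: finite_subset)
    have cXY: "card X \<le> card Y" using card_mono[OF fY XY] .
    show ?thesis
    proof (cases "X = Y")
      case True then show ?thesis using Y by simp
    next
      case False
      then have "card X < card Y" using psubset_card_mono[OF fY] XY by blast
      then show ?thesis using Y XY unfolding mk_def by auto
    qed
  qed
  have ex: "X \<in> mk d T \<Longrightarrow> Y \<in> mk d T \<Longrightarrow> card X < card Y \<Longrightarrow> \<exists>y\<in>Y - X. insert y X \<in> mk d T" for X Y
  proof -
    assume X: "X \<in> mk d T" and Y: "Y \<in> mk d T" and c: "card X < card Y"
    have fX: "finite X" and fY: "finite Y" using X Y unfolding mk_def by (auto intro: finite_subset)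
    have cY: "card Y \<le> 3" and XD: "X \<subseteq> {1..d}" and YD: "Y \<subseteq> {1..d}" using Y X unfolding mk_def by auto
    show ?thesis
    proof (cases "card X \<le> 1")
      case True
      have "\<not> Y \<subseteq> X"
      proof
        assume "Y \<subseteq> X"
        then have "card Y \<le> card X" using card_mono[OF fX] by blast
        then show False using c by simp
      qed
      then obtain y where y: "y \<in> Y" "y \<notin> X" by blast
      have "card (insert y X) \<le> 2" using True fX y by simp
      then have "insert y X \<in> mk d T" using XD YD y unfolding mk_def by auto
      then show ?thesis using y by blast
    next
      case False
      then have cX2: "card X = 2" and cY3: "card Y = 3" using c cY by auto
      from cX2 obtain a b where ab: "X = {a,b}" "a \<noteq> b" by (meson card_2_iff)
      from cY3 obtain p q r where pqr0: "Y = {p,q,r}" "p \<noteq> q" "p \<noteq> r" "q \<noteq> r"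
        by (meson card_3_iff)
      have pqr: "distinct [p,q,r]" using pqr0 by simp
      have "Y \<notin> T" using Y cY3 unfolding mk_def by auto
      then have "{p,q,r} \<notin> T" using pqr0 by simp
      from exch3[OF cl ab(2) pqr this] obtain y where y0: "y \<in> {p,q,r} - {a,b}" "{a,b,y} \<notin> T"
        by blast
      have y: "y \<in> Y - X" using y0 pqr0 ab by simp
      have ins: "insert y X = {a,b,y}" using ab by auto
      have c3: "card {a,b,y} = 3" using y0 ab by auto
      have "insert y X \<subseteq> {1..d}" using y XD YD by auto
      then have "insert y X \<in> mk d T" unfolding mk_def using ins c3 y0 by simp
      then show ?thesis using y by blast
    qed
  qed
  have g1: "mk d T \<subseteq> Pow {1..d}" unfolding mk_def by blast
  have g2: "{} \<in> mk d T" unfolding mk_def by simp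
  have g3: "\<forall>X. X \<subseteq> {1..d} \<and> card X \<le> 2 \<longrightarrow> X \<in> mk d T" unfolding mk_def by blast
  have g4: "\<forall>X \<in> mk d T. card X \<le> 3" unfolding mk_def by auto
  have g5: "\<forall>X Y. Y \<in> mk d T \<and> X \<subseteq> Y \<longrightarrow> X \<in> mk d T" using sub by blast
  have g6: "\<forall>X Y. X \<in> mk d T \<and> Y \<in> mk d T \<and> card X < card Y \<longrightarrow> (\<exists>y \<in> Y - X. insert y X \<in> mk d T)"
    using ex by blast
  show ?thesis
    unfolding point_line_config_def matroid_def
    using g1 g2 g3 g4 g5 g6 by simp
qed

lemma dep3_mk:
  assumes "T \<subseteq> {X. X \<subseteq> {1..d} \<and> card X = 3}"
  shows "dep3 d (mk d T) = T"
  using assms unfolding dep3_def mk_def by auto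

lemma config_mk:
  assumes "point_line_config d N"
  shows "N = mk d (dep3 d N)"
proof -
  have m: "matroid {1..d} N" and s: "\<And>X. X \<subseteq> {1..d} \<Longrightarrow> card X \<le> 2 \<Longrightarrow> X \<in> N"
    and c: "\<And>X. X \<in> N \<Longrightarrow> card X \<le> 3"
    using assms unfolding point_line_config_def by auto
  have p: "N \<subseteq> Pow {1..d}" using m unfolding matroid_def by auto
  show ?thesis
  proof
    show "N \<subseteq> mk d (dep3 d N)"
      using p c unfolding mk_def dep3_def by (force simp: le_Suc_eq)
    show "mk d (dep3 d N) \<subseteq> N"
      using s unfolding mk_def dep3_def by auto
  qed
qed

lemma config_closed:
  assumes "point_line_config d N"
  shows "closedT (dep3 d N)"
  unfolding closedT_def
proof (intro allI impI)
  fix a b c e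
  assume H: "distinct [a,b,c,e] \<and> {a,b,c} \<in> dep3 d N \<and> {a,b,e} \<in> dep3 d N"
  have m: "matroid {1..d} N" and s: "\<And>X. X \<subseteq> {1..d} \<Longrightarrow> card X \<le> 2 \<Longrightarrow> X \<in> N"
    using assms unfolding point_line_config_def by auto
  have sub: "{a,c,e} \<subseteq> {1..d}" "{a,b} \<subseteq> {1..d}" using H unfolding dep3_def by auto
  have c3: "card {a,c,e} = 3" using H by auto
  have ab: "{a,b} \<in> N" using s[OF sub(2)] H by auto
  show "{a,c,e} \<in> dep3 d N"
  proof (rule ccontr)
    assume "{a,c,e} \<notin> dep3 d N"
    then have ace: "{a,c,e} \<in> N" using sub c3 unfolding dep3_def by auto
    have "card {a,b} < card {a,c,e}" using H by auto
    moreover have exm: "\<forall>X Y. X \<in> N \<and> Y \<in> N \<and> card X < card Y \<longrightarrow> (\<exists>y \<in> Y - X. insert y X \<in> N)"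
      using m unfolding matroid_def by (elim conjE) assumption
    ultimately obtain y where y: "y \<in> {a,c,e} - {a,b}" "insert y {a,b} \<in> N"
      using ab ace by blast
    have nc: "{a,b,c} \<notin> N" and ne: "{a,b,e} \<notin> N" using H unfolding dep3_def by auto
    have "y = c \<or> y = e" using y(1) by auto
    moreover have "insert c {a,b} = {a,b,c}" "insert e {a,b} = {a,b,e}" by auto
    ultimately show False using y(2) nc ne by auto
  qed
qed

lemma dep_le_iff:
  assumes "point_line_config d N1" "point_line_config d N2"
  shows "dep_le d N1 N2 \<longleftrightarrow> dep3 d N1 \<subseteq> dep3 d N2"
proof
  assume D: "dep_le d N1 N2"
  show "dep3 d N1 \<subseteq> dep3 d N2"
  proof
    fix X assume "X \<in> dep3 d N1"
    then have X: "X \<subseteq> {1..d}" "card X = 3" "X \<notin> N1" unfolding dep3_def by auto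
    then have "dependent {1..d} N1 X" unfolding dependent_def by simp
    then have "dependent {1..d} N2 X" using D unfolding dep_le_def by blast
    then show "X \<in> dep3 d N2" using X unfolding dependent_def dep3_def by simp
  qed
next
  assume S: "dep3 d N1 \<subseteq> dep3 d N2"
  have e1: "N1 = mk d (dep3 d N1)" and e2: "N2 = mk d (dep3 d N2)"
    using config_mk assms by blast+
  show "dep_le d N1 N2"
    unfolding dep_le_def dependent_def
  proof (intro allI impI)
    fix X assume X: "X \<subseteq> {1..d} \<and> X \<notin> N1"
    then have "X \<notin> mk d (dep3 d N1)" using e1 by simp
    then have "card X \<ge> 4 \<or> X \<in> dep3 d N1" using X unfolding mk_def dep3_def by auto
    then have "X \<notin> mk d (dep3 d N2)" using S unfolding mk_def dep3_def by auto
    then show "X \<subseteq> {1..d} \<and> X \<notin> N2" using X e2 by simp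
  qed
qed

lemma realizes_iff:
  assumes "hypergraph_ge3 d \<Delta>"
  shows "realizes_hypergraph d \<Delta> N \<longleftrightarrow>
    (\<forall>F \<in> \<Delta>. \<forall>S. S \<subseteq> F \<and> card S = 3 \<longrightarrow> S \<in> dep3 d N)"
proof -
  have HF: "\<And>F. F \<in> \<Delta> \<Longrightarrow> F \<subseteq> {1..d}"
    using assms unfolding hypergraph_ge3_def hypergraph_def by blast
  have "\<And>F S. F \<in> \<Delta> \<Longrightarrow> S \<subseteq> F \<Longrightarrow> card S = 3 \<Longrightarrow> dependent {1..d} N S \<longleftrightarrow> S \<in> dep3 d N"
  proof -
    fix F S assume "F \<in> \<Delta>" "S \<subseteq> F" "card S = 3"
    then have "S \<subseteq> {1..d}" using HF by blast
    then show "dependent {1..d} N S \<longleftrightarrow> S \<in> dep3 d N"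
      using \<open>card S = 3\<close> unfolding dependent_def dep3_def by simp
  qed
  then show ?thesis unfolding realizes_hypergraph_def by metis
qed

theorem mainTheorem4:
  fixes d :: nat and \<Delta> :: "nat set set"
  assumes "hypergraph_ge3 d \<Delta>"
  shows "\<exists>!N. point_line_config d N \<and> realizes_hypergraph d \<Delta> N \<and>
           (\<forall>N'. point_line_config d N' \<and> realizes_hypergraph d \<Delta> N' \<and> dep_le d N' N
                 \<longrightarrow> N' = N)"
proof -
  define E where "E T \<longleftrightarrow> (\<forall>F \<in> \<Delta>. \<forall>S. S \<subseteq> F \<and> card S = 3 \<longrightarrow> S \<in> T)" for T
  define T0 where "T0 = {S. S \<subseteq> {1..d} \<and> card S = 3 \<and> (\<forall>T. closedT T \<and> E T \<longrightarrow> S \<in> T)}"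
  have HF: "\<And>F. F \<in> \<Delta> \<Longrightarrow> F \<subseteq> {1..d}"
    using assms unfolding hypergraph_ge3_def hypergraph_def by blast
  have T0sub: "T0 \<subseteq> {X. X \<subseteq> {1..d} \<and> card X = 3}" unfolding T0_def by auto
  have clT0: "closedT T0"
    unfolding closedT_def
  proof (intro allI impI)
    fix a b c e
    assume H: "distinct [a,b,c,e] \<and> {a,b,c} \<in> T0 \<and> {a,b,e} \<in> T0"
    have "{a,c,e} \<subseteq> {1..d}" using H unfolding T0_def by auto
    moreover have "card {a,c,e} = 3" using H by auto
    moreover have "\<forall>T. closedT T \<and> E T \<longrightarrow> {a,c,e} \<in> T"
    proof (intro allI impI)
      fix T assume T: "closedT T \<and> E T"
      then have "{a,b,c} \<in> T" "{a,b,e} \<in> T" using H unfolding T0_def by auto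
      then show "{a,c,e} \<in> T" using T H unfolding closedT_def by blast
    qed
    ultimately show "{a,c,e} \<in> T0" unfolding T0_def by blast
  qed
  have ET0: "E T0" unfolding E_def T0_def using HF by blast
  define N0 where "N0 = mk d T0"
  have cN0: "point_line_config d N0" unfolding N0_def using mk_config[OF clT0] .
  have dN0: "dep3 d N0 = T0" unfolding N0_def using dep3_mk[OF T0sub] .
  have low: "\<And>N. point_line_config d N \<Longrightarrow> realizes_hypergraph d \<Delta> N \<Longrightarrow> T0 \<subseteq> dep3 d N"
  proof -
    fix N assume c: "point_line_config d N" and r: "realizes_hypergraph d \<Delta> N"
    have "closedT (dep3 d N)" using config_closed[OF c] .
    moreover have "E (dep3 d N)" using r realizes_iff[OF assms] unfolding E_def by blast
    ultimately show "T0 \<subseteq> dep3 d N" unfolding T0_def by blast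
  qed
  have rN0: "realizes_hypergraph d \<Delta> N0"
    using realizes_iff[OF assms] ET0 dN0 unfolding E_def by simp
  have minN0: "\<forall>N'. point_line_config d N' \<and> realizes_hypergraph d \<Delta> N' \<and> dep_le d N' N0
                 \<longrightarrow> N' = N0"
  proof (intro allI impI)
    fix N' assume H: "point_line_config d N' \<and> realizes_hypergraph d \<Delta> N' \<and> dep_le d N' N0"
    then have "dep3 d N' \<subseteq> T0" using dep_le_iff[OF _ cN0] dN0 by blast
    moreover have "T0 \<subseteq> dep3 d N'" using low H by blast
    ultimately have "dep3 d N' = T0" by blast
    then show "N' = N0" using config_mk H N0_def by metis
  qed
  show ?thesis
  proof (rule ex1I[of _ N0])
    show "point_line_config d N0 \<and> realizes_hypergraph d \<Delta> N0 \<and>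
           (\<forall>N'. point_line_config d N' \<and> realizes_hypergraph d \<Delta> N' \<and> dep_le d N' N0
                 \<longrightarrow> N' = N0)" using cN0 rN0 minN0 by blast
  next
    fix N assume H: "point_line_config d N \<and> realizes_hypergraph d \<Delta> N \<and>
           (\<forall>N'. point_line_config d N' \<and> realizes_hypergraph d \<Delta> N' \<and> dep_le d N' N
                 \<longrightarrow> N' = N)"
    have "dep_le d N0 N" using dep_le_iff[OF cN0] H low dN0 by blast
    then show "N = N0" using H cN0 rN0 by metis
  qed
qed

end
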